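(* Let $q$ be a mean-field Gamma variational distribution over positive latent variables $\alpha_{v_i},\rho_{e_j},\theta_{v_ik},\beta_{e_jk}$ (all mutually independent under $q$, each Gamma distributed), and let $\lambda_{v_ie_j}=\alpha_{v_i}\rho_{e_j}\sum_{k=1}^K\theta_{v_ik}\beta_{e_jk}$. Define $T_{v_ie_j}:=\mathbb{E}_q[\log(1-e^{-\lambda_{v_ie_j}})]$ and $S_{v_ie_j}:=\mathbb{E}_q[\log\lambda_{v_ie_j}]$. Then $$T_{v_ie_j}\ \ge\ -\mathbb{E}_q[\lambda_{v_ie_j}]+\log\Big(\exp\big(\exp(S_{v_ie_j})\big)-1\Big).$$ *)

theory Defs
  imports "HOL-Probability.Probability"
begin

definition gamma_density :: "real \<Rightarrow> real \<Rightarrow> real \<Rightarrow> real" where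
  "gamma_density a b x =
     (if x > 0 then b powr a * x powr (a - 1) * exp (- b * x) / Gamma a else 0)"

datatype ('v, 'e) latent = Alpha 'v | Rho 'e | Theta 'v nat | Beta 'e nat

definition latent_index :: "'v set \<Rightarrow> 'e set \<Rightarrow> nat \<Rightarrow> ('v, 'e) latent set" where
  "latent_index V E K =
     Alpha ` V \<union> Rho ` E \<union>
     {Theta v k | v k. v \<in> V \<and> k \<in> {1..K}} \<union>
     {Beta e k | e k. e \<in> E \<and> k \<in> {1..K}}"

definition q_meanfield ::
  "'v set \<Rightarrow> 'e set \<Rightarrow> nat \<Rightarrow> (('v,'e) latent \<Rightarrow> real) \<Rightarrow> (('v,'e) latent \<Rightarrow> real)
     \<Rightarrow> (('v,'e) latent \<Rightarrow> real) measure" where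
  "q_meanfield V E K a b =
     PiM (latent_index V E K) (\<lambda>l. density lborel (gamma_density (a l) (b l)))"

definition lam :: "nat \<Rightarrow> 'v \<Rightarrow> 'e \<Rightarrow> (('v,'e) latent \<Rightarrow> real) \<Rightarrow> real" where
  "lam K v e \<omega> = \<omega> (Alpha v) * \<omega> (Rho e) * (\<Sum>k = 1..K. \<omega> (Theta v k) * \<omega> (Beta e k))"

end

theory Submission imports Defs begin
lemma gamma_density_meas[measurable]: "gamma_density s b \<in> borel_measurable borel"
  unfolding gamma_density_def by measurable

lemma gamma_density_nonneg: "s > 0 \<Longrightarrow> b > 0 \<Longrightarrow> gamma_density s b x \<ge> 0"
  unfolding gamma_density_def by auto

lemma gamma_nn:
  assumes s: "s > 0" and b: "b > 0"
  shows "(\<integral>\<^sup>+x. ennreal (gamma_density s b x) \<partial>lborel) = 1"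
proof -
  define h where "h x = (if x > 0 then x powr (s-1) * exp (-b*x) else 0)" for x
  have hm[measurable]: "h \<in> borel_measurable borel" unfolding h_def by measurable
  define N where "N = (\<integral>\<^sup>+x. ennreal (h x) \<partial>lborel)"
  have "ennreal (Gamma s) = (\<integral>\<^sup>+t. ennreal (indicator {0..} t * t powr (s - 1) / exp t) \<partial>lborel)"
    using Gamma_conv_nn_integral_real[OF s] by simp
  also have "\<dots> = \<bar>b\<bar> * (\<integral>\<^sup>+x. ennreal (indicator {0..} (0 + b*x) * (0 + b*x) powr (s - 1) / exp (0 + b*x)) \<partial>lborel)"
    by (rule nn_integral_real_affine) (use b in auto)
  also have "\<dots> = b * (\<integral>\<^sup>+x. ennreal (b powr (s-1) * h x) \<partial>lborel)"
  proof -
    have "indicator {0..} (0 + b*x) * (0 + b*x) powr (s - 1) / exp (0 + b*x) = b powr (s-1) * h x" for x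
      using b by (auto simp: h_def indicator_def powr_mult exp_minus field_simps zero_le_mult_iff)
    then show ?thesis using b by simp
  qed
  also have "\<dots> = b * (ennreal (b powr (s-1)) * N)"
  proof -
    have "(\<integral>\<^sup>+x. ennreal (b powr (s-1) * h x) \<partial>lborel) = (\<integral>\<^sup>+x. ennreal (b powr (s-1)) * ennreal (h x) \<partial>lborel)"
      by (intro nn_integral_cong) (auto simp: h_def ennreal_mult)
    then show ?thesis by (simp add: nn_integral_cmult N_def)
  qed
  also have "\<dots> = ennreal (b powr s) * N"
    using b by (simp add: ennreal_mult[symmetric] mult.assoc[symmetric] powr_diff powr_one)
  finally have G: "ennreal (Gamma s) = ennreal (b powr s) * N" .
  have "(\<integral>\<^sup>+x. ennreal (gamma_density s b x) \<partial>lborel) = (\<integral>\<^sup>+x. ennreal (b powr s / Gamma s) * ennreal (h x) \<partial>lborel)"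
    using s b by (intro nn_integral_cong) (auto simp: gamma_density_def h_def ennreal_mult[symmetric] exp_minus field_simps)
  also have "\<dots> = ennreal (1 / Gamma s) * (ennreal (b powr s) * N)"
    using s b by (simp add: nn_integral_cmult N_def ennreal_mult[symmetric] mult.assoc[symmetric])
  also have "\<dots> = 1" unfolding G[symmetric] using Gamma_real_pos[OF s] by (simp add: ennreal_mult[symmetric])
  finally show ?thesis .
qed

lemma gamma_prob: "s > 0 \<Longrightarrow> b > 0 \<Longrightarrow> prob_space (density lborel (gamma_density s b))"
  by (rule prob_spaceI) (simp add: emeasure_density gamma_nn)

lemma gamma_int_lborel: "s > 0 \<Longrightarrow> b > 0 \<Longrightarrow> integrable lborel (gamma_density s b)"
  by (rule integrableI_nonneg) (auto simp: gamma_density_nonneg gamma_nn)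

lemma AE_gamma_pos: "AE x in density lborel (gamma_density s b). x > 0"
  by (subst AE_density) (auto simp: gamma_density_def)

lemma gamma_moment:
  assumes a: "a > 0" and b: "b > 0" and p: "a + p > 0"
  shows "integrable (density lborel (gamma_density a b)) (\<lambda>x. x powr p)"
proof -
  define c where "c = (b powr a / Gamma a) * (Gamma (a+p) / b powr (a+p))"
  have eq: "gamma_density a b x * x powr p = c * gamma_density (a+p) b x" for x
  proof (cases "x > 0")
    case True
    have "x powr (a + p - 1) = x powr (a - 1) * x powr p" using True by (simp add: powr_add[symmetric] algebra_simps)
    moreover have "Gamma a \<noteq> 0" "Gamma (a+p) \<noteq> 0" using Gamma_real_pos[OF a] Gamma_real_pos[OF p] by auto
    ultimately show ?thesis using True a b p
      by (simp add: gamma_density_def c_def field_simps)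
  qed (simp add: gamma_density_def)
  have "integrable lborel (\<lambda>x. c * gamma_density (a+p) b x)"
    using gamma_int_lborel[OF p b] by simp
  then have "integrable lborel (\<lambda>x. gamma_density a b x *\<^sub>R x powr p)"
    using eq by simp
  then show ?thesis
    by (subst integrable_density) (auto simp: gamma_density_nonneg a b)
qed

lemma gamma_int_id:
  assumes a: "a > 0" and b: "b > 0"
  shows "integrable (density lborel (gamma_density a b)) (\<lambda>x. x)"
proof -
  have "integrable (density lborel (gamma_density a b)) (\<lambda>x. x powr 1)"
    using gamma_moment[OF a b, of 1] a by simp
  then show ?thesis
    by (rule integrable_cong_AE_imp) (use AE_gamma_pos[of a b] in \<open>auto elim!: AE_mp\<close>)
qed

lemma abs_ln_bound:
  fixes x c :: real
  assumes x: "x > 0" and c: "c > 0"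
  shows "\<bar>ln x\<bar> \<le> x + (1/c) * x powr (-c)"
proof (cases "x \<ge> 1")
  case True
  then have "\<bar>ln x\<bar> = ln x" using x by (intro abs_of_nonneg) simp
  also have "\<dots> \<le> x" using x ln_le_minus_one[of x] by linarith
  finally show ?thesis using c x by (smt (verit) divide_pos_pos powr_gt_zero mult_pos_pos)
next
  case False
  have "ln (x powr (-c)) \<le> x powr (-c)" using ln_le_minus_one[of "x powr (-c)"] x by simp
  then have "-c * ln x \<le> x powr (-c)" using x by (simp add: ln_powr)
  then have "- ln x \<le> (1/c) * x powr (-c)" using c by (simp add: field_simps)
  moreover have "ln x \<le> 0" using False x by simp
  ultimately show ?thesis using x by simp
qed

lemma gamma_int_ln:
  assumes a: "a > 0" and b: "b > 0"
  shows "integrable (density lborel (gamma_density a b)) ln"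
proof -
  have "integrable (density lborel (gamma_density a b)) (\<lambda>x. x + (2/a) * x powr (-(a/2)))"
    using gamma_moment[OF a b, of "-(a/2)"] gamma_int_id[OF a b] a by simp
  then show ?thesis
  proof (rule Bochner_Integration.integrable_bound)
    show "AE x in density lborel (gamma_density a b). norm (ln x) \<le> norm (x + (2/a) * x powr (-(a/2)))"
      using AE_gamma_pos
    proof (rule AE_mp, intro AE_I2 impI)
      fix x :: real assume x: "x > 0"
      have "\<bar>ln x\<bar> \<le> x + (1/(a/2)) * x powr (-(a/2))" by (rule abs_ln_bound) (use x a in auto)
      then show "norm (ln x) \<le> norm (x + (2/a) * x powr (-(a/2)))" using x by simp
    qed
  qed simp
qed

lemma g_mono:
  fixes s t :: real
  assumes s: "0 < s" and st: "s \<le> t"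
  shows "s * exp s / (exp s - 1) \<le> t * exp t / (exp t - 1)"
proof (rule DERIV_nonneg_imp_nondecreasing[where f = "\<lambda>t. t * exp t / (exp t - 1)"], rule st, intro exI conjI)
  fix x :: real assume x: "s \<le> x" "x \<le> t"
  then have x0: "x > 0" using s by simp
  then have e1: "exp x - 1 > 0" by simp
  show "DERIV (\<lambda>t. t * exp t / (exp t - 1)) x :> exp x * (exp x - 1 - x) / (exp x - 1)^2"
    using e1 by (auto intro!: derivative_eq_intros simp: field_simps power2_eq_square)
  have "exp x - 1 - x \<ge> 0" using exp_ge_add_one_self[of x] by linarith
  then show "0 \<le> exp x * (exp x - 1 - x) / (exp x - 1)^2" by (intro divide_nonneg_nonneg mult_nonneg_nonneg) auto
qed

lemma f_convex: "convex_on UNIV (\<lambda>u::real. ln (exp (exp u) - 1))"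
proof (rule convex_on_realI[where f' = "\<lambda>u. exp u * exp (exp u) / (exp (exp u) - 1)"])
  fix x :: real
  have "exp (exp x) - 1 > 0" by simp
  then show "((\<lambda>u::real. ln (exp (exp u) - 1)) has_real_derivative exp x * exp (exp x) / (exp (exp x) - 1)) (at x)"
    by (auto intro!: derivative_eq_intros simp: field_simps)
next
  fix x y :: real assume "x \<le> y"
  then show "exp x * exp (exp x) / (exp (exp x) - 1) \<le> exp y * exp (exp y) / (exp (exp y) - 1)"
    by (intro g_mono) auto
qed simp

lemma main:
  fixes I :: "('v,'e) latent set" and a b :: "('v,'e) latent \<Rightarrow> real" and K :: nat and v :: 'v and e :: 'e
  assumes fin: "finite I" and apos: "\<And>l. a l > 0" and bpos: "\<And>l. b l > 0" and K: "K \<ge> 1"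
    and inA: "Alpha v \<in> I" and inR: "Rho e \<in> I"
    and inT: "\<And>k. k \<in> {1..K} \<Longrightarrow> Theta v k \<in> I"
    and inB: "\<And>k. k \<in> {1..K} \<Longrightarrow> Beta e k \<in> I"
  defines "M \<equiv> \<lambda>l. density lborel (gamma_density (a l) (b l))"
  defines "Q \<equiv> PiM I M"
  shows "(\<integral>\<omega>. ln (1 - exp (- lam K v e \<omega>)) \<partial>Q) \<ge>
         - (\<integral>\<omega>. lam K v e \<omega> \<partial>Q) + ln (exp (exp (\<integral>\<omega>. ln (lam K v e \<omega>) \<partial>Q)) - 1)"
proof -
  have ps: "prob_space (M l)" for l unfolding M_def by (rule gamma_prob[OF apos bpos])
  interpret PP: product_prob_space M I
    unfolding product_prob_space_def product_prob_space_axioms_def product_sigma_finite_def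
    using ps prob_space_imp_sigma_finite by blast
  have pQ: "prob_space Q" unfolding Q_def by (rule PP.P.prob_space_axioms)
  have cp: "integrable Q (\<lambda>\<omega>. \<Prod>j\<in>J. g j (\<omega> j))"
    if J: "J \<subseteq> I" and gi: "\<And>j. j \<in> J \<Longrightarrow> integrable (M j) (g j)" for J and g :: "_ \<Rightarrow> real \<Rightarrow> real"
  proof -
    have "integrable Q (\<lambda>\<omega>. \<Prod>i\<in>I. (if i \<in> J then g i else (\<lambda>_. 1)) (\<omega> i))"
      unfolding Q_def
      by (rule PP.product_integrable_prod[OF fin]) (auto intro: gi simp: finite_measure.integrable_const[OF prob_space.finite_measure[OF ps]])
    moreover have "(\<Prod>i\<in>I. (if i \<in> J then g i else (\<lambda>_. 1)) (\<omega> i)) = (\<Prod>j\<in>J. g j (\<omega> j))" for \<omega>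
    proof -
      have "(\<Prod>i\<in>I. (if i \<in> J then g i else (\<lambda>_. 1)) (\<omega> i)) = (\<Prod>i\<in>I. if i \<in> J then g i (\<omega> i) else 1)"
        by (intro prod.cong) auto
      also have "\<dots> = (\<Prod>i\<in>{i\<in>I. i \<in> J}. g i (\<omega> i))" by (rule prod.inter_filter[OF fin, symmetric])
      also have "{i\<in>I. i \<in> J} = J" using J by auto
      finally show ?thesis .
    qed
    ultimately show ?thesis by simp
  qed
  have coord: "integrable Q (\<lambda>\<omega>. g (\<omega> l))" if "l \<in> I" "integrable (M l) g" for l and g :: "real \<Rightarrow> real"
    using cp[of "{l}" "\<lambda>_. g"] that by simp
  have lam_eq: "lam K v e \<omega> = (\<Sum>k=1..K. \<Prod>j\<in>{Alpha v, Rho e, Theta v k, Beta e k}. \<omega> j)" for \<omega>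
    unfolding lam_def sum_distrib_left by (intro sum.cong) (auto simp: mult_ac)
  have lam_int: "integrable Q (lam K v e)"
    unfolding lam_eq
    by (intro Bochner_Integration.integrable_sum cp) (auto simp: inA inR inT inB M_def gamma_int_id apos bpos)
  have lam_meas[measurable]: "lam K v e \<in> borel_measurable Q" using lam_int by simp
  have lnc: "integrable Q (\<lambda>\<omega>. ln (\<omega> l))" if "l \<in> I" for l
    using coord[OF that, of ln] by (simp add: M_def gamma_int_ln apos bpos)
  have meas_c[measurable]: "(\<lambda>\<omega>. \<omega> l) \<in> borel_measurable Q" if "l \<in> I" for l
  proof -
    have "(\<lambda>\<omega>. \<omega> l) \<in> measurable (PiM I M) (M l)" by (rule measurable_component_singleton[OF that])
    moreover have "measurable (PiM I M) (M l) = measurable (PiM I M) borel"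
      by (rule measurable_cong_sets) (simp_all add: M_def)
    ultimately show ?thesis by (simp add: Q_def)
  qed
  have AEpos: "AE \<omega> in Q. \<forall>l\<in>I. \<omega> l > 0"
  proof (rule AE_finite_allI[OF fin])
    fix l assume l: "l \<in> I"
    show "AE \<omega> in Q. \<omega> l > 0"
      unfolding Q_def by (rule PP.AE_component[OF l]) (unfold M_def, rule AE_gamma_pos)
  qed
  define P where "P \<omega> \<longleftrightarrow> (\<forall>l\<in>I. \<omega> l > 0)" for \<omega> :: "('v,'e) latent \<Rightarrow> real"
  have AEP: "AE \<omega> in Q. P \<omega>" using AEpos by (simp add: P_def)
  define m where "m \<omega> = \<omega> (Alpha v) * \<omega> (Rho e) * (\<omega> (Theta v 1) * \<omega> (Beta e 1))" for \<omega> :: "('v,'e) latent \<Rightarrow> real"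
  have K1: "1 \<in> {1..K}" using K by simp
  have mpos: "m \<omega> > 0" if "P \<omega>" for \<omega>
    using that inA inR inT[OF K1] inB[OF K1] by (auto simp: P_def m_def)
  have mle: "m \<omega> \<le> lam K v e \<omega>" if "P \<omega>" for \<omega>
  proof -
    have "\<omega> (Theta v 1) * \<omega> (Beta e 1) \<le> (\<Sum>k=1..K. \<omega> (Theta v k) * \<omega> (Beta e k))"
      using that inT inB K1 by (intro member_le_sum) (auto simp: P_def less_imp_le)
    moreover have "\<omega> (Alpha v) * \<omega> (Rho e) > 0" using that inA inR by (auto simp: P_def)
    ultimately show ?thesis unfolding m_def lam_def by (simp add: mult_left_mono)
  qed
  have lampos: "lam K v e \<omega> > 0" if "P \<omega>" for \<omega> using mpos[OF that] mle[OF that] by linarith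
  have lnm: "ln (m \<omega>) = ln (\<omega> (Alpha v)) + ln (\<omega> (Rho e)) + ln (\<omega> (Theta v 1)) + ln (\<omega> (Beta e 1))" if "P \<omega>" for \<omega>
    using that inA inR inT[OF K1] inB[OF K1] by (auto simp: P_def m_def ln_mult)
  have lnlam_int: "integrable Q (\<lambda>\<omega>. ln (lam K v e \<omega>))"
  proof (rule Bochner_Integration.integrable_bound)
    show "integrable Q (\<lambda>\<omega>. lam K v e \<omega> + (\<bar>ln (\<omega> (Alpha v))\<bar> + \<bar>ln (\<omega> (Rho e))\<bar> + \<bar>ln (\<omega> (Theta v 1))\<bar> + \<bar>ln (\<omega> (Beta e 1))\<bar>))"
      using lam_int lnc inA inR inT[OF K1] inB[OF K1] by (intro Bochner_Integration.integrable_add integrable_abs) auto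
    show "AE \<omega> in Q. norm (ln (lam K v e \<omega>)) \<le> norm (lam K v e \<omega> + (\<bar>ln (\<omega> (Alpha v))\<bar> + \<bar>ln (\<omega> (Rho e))\<bar> + \<bar>ln (\<omega> (Theta v 1))\<bar> + \<bar>ln (\<omega> (Beta e 1))\<bar>))"
      using AEP
    proof (rule AE_mp, intro AE_I2 impI)
      fix \<omega> assume p: "P \<omega>"
      have u: "ln (lam K v e \<omega>) \<le> lam K v e \<omega>" using ln_le_minus_one[OF lampos[OF p]] by linarith
      have l: "ln (m \<omega>) \<le> ln (lam K v e \<omega>)" using mpos[OF p] mle[OF p] by simp
      show "norm (ln (lam K v e \<omega>)) \<le> norm (lam K v e \<omega> + (\<bar>ln (\<omega> (Alpha v))\<bar> + \<bar>ln (\<omega> (Rho e))\<bar> + \<bar>ln (\<omega> (Theta v 1))\<bar> + \<bar>ln (\<omega> (Beta e 1))\<bar>))"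
        using u l lnm[OF p] lampos[OF p] by (simp add: abs_le_iff) linarith
    qed
  qed measurable
  define f where "f u = ln (exp (exp u) - 1)" for u :: real
  have Lf_bounds: "ln (lam K v e \<omega>) \<le> f (ln (lam K v e \<omega>)) \<and> f (ln (lam K v e \<omega>)) \<le> ln (lam K v e \<omega>) + lam K v e \<omega>"
    if p: "P \<omega>" for \<omega>
  proof -
    define x where "x = lam K v e \<omega>"
    have x: "x > 0" using lampos[OF p] by (simp add: x_def)
    have fx: "f (ln x) = ln (exp x - 1)" using x by (simp add: f_def)
    have e1: "x \<le> exp x - 1" using exp_ge_add_one_self[of x] by linarith
    have e2: "exp x - 1 \<le> x * exp x"
    proof -
      have "1 - x \<le> exp (-x)" using exp_ge_add_one_self[of "-x"] by linarith
      then have "exp x * (1 - x) \<le> exp x * exp (-x)" by (intro mult_left_mono) auto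
      then show ?thesis by (simp add: exp_minus algebra_simps)
    qed
    have "ln x \<le> ln (exp x - 1)" using x e1 by simp
    moreover have "ln (exp x - 1) \<le> ln (x * exp x)" using x e1 e2 by simp
    moreover have "ln (x * exp x) = ln x + x" using x by (simp add: ln_mult)
    ultimately show ?thesis using fx by (simp add: x_def)
  qed
  have flam_int: "integrable Q (\<lambda>\<omega>. f (ln (lam K v e \<omega>)))"
  proof (rule Bochner_Integration.integrable_bound)
    show "integrable Q (\<lambda>\<omega>. \<bar>ln (lam K v e \<omega>)\<bar> + lam K v e \<omega>)"
      using lnlam_int lam_int by (intro Bochner_Integration.integrable_add integrable_abs)
    show "AE \<omega> in Q. norm (f (ln (lam K v e \<omega>))) \<le> norm (\<bar>ln (lam K v e \<omega>)\<bar> + lam K v e \<omega>)"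
      using AEP
    proof (rule AE_mp, intro AE_I2 impI)
      fix \<omega> assume p: "P \<omega>"
      show "norm (f (ln (lam K v e \<omega>))) \<le> norm (\<bar>ln (lam K v e \<omega>)\<bar> + lam K v e \<omega>)"
        using Lf_bounds[OF p] lampos[OF p] by (simp add: abs_le_iff) linarith
    qed
  qed (unfold f_def, measurable)
  have T_eq: "(\<integral>\<omega>. ln (1 - exp (- lam K v e \<omega>)) \<partial>Q) = (\<integral>\<omega>. - lam K v e \<omega> + f (ln (lam K v e \<omega>)) \<partial>Q)"
  proof (rule integral_cong_AE)
    show "AE \<omega> in Q. ln (1 - exp (- lam K v e \<omega>)) = - lam K v e \<omega> + f (ln (lam K v e \<omega>))"
      using AEP
    proof (rule AE_mp, intro AE_I2 impI)
      fix \<omega> assume p: "P \<omega>"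
      define x where "x = lam K v e \<omega>"
      have x: "x > 0" using lampos[OF p] by (simp add: x_def)
      have "1 - exp (-x) = exp (-x) * (exp x - 1)" by (simp add: exp_minus field_simps)
      then have "ln (1 - exp (-x)) = ln (exp (-x)) + ln (exp x - 1)" using x by (simp add: ln_mult)
      then show "ln (1 - exp (- lam K v e \<omega>)) = - lam K v e \<omega> + f (ln (lam K v e \<omega>))"
        using x by (simp add: x_def f_def)
    qed
  qed (unfold f_def, measurable)
  have J: "f (\<integral>\<omega>. ln (lam K v e \<omega>) \<partial>Q) \<le> (\<integral>\<omega>. f (ln (lam K v e \<omega>)) \<partial>Q)"
    by (rule prob_space.jensens_inequality[OF pQ lnlam_int _ _ flam_int, where I = UNIV])
       (auto simp: f_def f_convex)
  show ?thesis
    unfolding T_eq using J lam_int flam_int by (simp add: f_def)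
qed

theorem theorem1:
  fixes V :: "'v set" and E :: "'e set" and K :: nat
    and a b :: "('v,'e) latent \<Rightarrow> real" and v :: 'v and e :: 'e
  assumes "finite V" and "finite E" and "K \<ge> 1"
    and "v \<in> V" and "e \<in> E"
    and "\<And>l. l \<in> latent_index V E K \<Longrightarrow> a l > 0"
    and "\<And>l. l \<in> latent_index V E K \<Longrightarrow> b l > 0"
  defines "T \<equiv> (\<integral>\<omega>. ln (1 - exp (- lam K v e \<omega>)) \<partial>q_meanfield V E K a b)"
    and "S \<equiv> (\<integral>\<omega>. ln (lam K v e \<omega>) \<partial>q_meanfield V E K a b)"
  shows "T \<ge> - (\<integral>\<omega>. lam K v e \<omega> \<partial>q_meanfield V E K a b) + ln (exp (exp S) - 1)"
proof -
  define I where "I = latent_index V E K"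
  define a' where "a' l = (if l \<in> I then a l else 1)" for l
  define b' where "b' l = (if l \<in> I then b l else 1)" for l
  have ThetaEq: "{Theta v k | v k. v \<in> V \<and> k \<in> {1..K}} = (\<lambda>(v,k). Theta v k) ` (V \<times> {1..K})" by auto
  have BetaEq: "{Beta e k | e k. e \<in> E \<and> k \<in> {1..K}} = (\<lambda>(e,k). Beta e k) ` (E \<times> {1..K})" by auto
  have fin: "finite I" unfolding I_def latent_index_def ThetaEq BetaEq using assms(1,2) by auto
  have q: "q_meanfield V E K a b = PiM I (\<lambda>l. density lborel (gamma_density (a' l) (b' l)))"
    unfolding q_meanfield_def I_def[symmetric] by (rule PiM_cong) (auto simp: a'_def b'_def)
  have "(\<integral>\<omega>. ln (1 - exp (- lam K v e \<omega>)) \<partial>PiM I (\<lambda>l. density lborel (gamma_density (a' l) (b' l)))) \<ge>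
         - (\<integral>\<omega>. lam K v e \<omega> \<partial>PiM I (\<lambda>l. density lborel (gamma_density (a' l) (b' l)))) +
         ln (exp (exp (\<integral>\<omega>. ln (lam K v e \<omega>) \<partial>PiM I (\<lambda>l. density lborel (gamma_density (a' l) (b' l))))) - 1)"
    by (rule main[OF fin]) (use assms(3-7) in \<open>auto simp: a'_def b'_def I_def latent_index_def\<close>)
  then show ?thesis unfolding T_def S_def q .
qed

end
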